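(* Let $f:G\to H$ be an epimorphism of finitely generated groups. Then the induced epimorphism $f_{RF}:RF(G)\to RF(H)$ is an isomorphism if and only if the induced epimorphism $f_{na}:RF_{na}(G)\to RF_{na}(H)$ is an isomorphism and $b_1(G)=b_1(H)$.
   Context: $\mathbb F$ denotes a non-abelian free group. $RF(G)$ is the quotient of $G$ by the intersection of the kernels of all homomorphisms $G\to\mathbb F$; $RF_{na}(G)$ is the quotient of $G$ by the intersection of the kernels of all homomorphisms $G\to\mathbb F$ with non-abelian image. An epimorphism $f:G\to H$ induces epimorphisms $RF(G)\to RF(H)$ and $RF_{na}(G)\to RF_{na}(H)$. $b_1(G)$ is the torsion-free rank of $H_1(G,\mathbb Z)$. *)

theory Defs
  imports "HOL-Algebra.Algebra"
begin

text \<open>A letter is a pair (generator, inverted?); there are two generators (type bool).\<close>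
type_synonym letter = "bool \<times> bool"

definition inv_letter :: "letter \<Rightarrow> letter" where
  "inv_letter a = (fst a, \<not> snd a)"

fun reduced_word :: "letter list \<Rightarrow> bool" where
  "reduced_word [] = True"
| "reduced_word [a] = True"
| "reduced_word (a # b # w) = (b \<noteq> inv_letter a \<and> reduced_word (b # w))"

definition cons_red :: "letter \<Rightarrow> letter list \<Rightarrow> letter list" where
  "cons_red a w = (case w of [] \<Rightarrow> [a]
                    | b # w' \<Rightarrow> (if b = inv_letter a then w' else a # w))"

definition F2 :: "letter list monoid" where
  "F2 = \<lparr>carrier = {w. reduced_word w}, monoid.mult = (\<lambda>x y. foldr cons_red x y), one = []\<rparr>"

definition RF_kernel :: "('a, 'b) monoid_scheme \<Rightarrow> 'a set" where
  "RF_kernel G = carrier G \<inter> (\<Inter>h \<in> hom G F2. kernel G F2 h)"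

definition nonabelian_image :: "('a, 'b) monoid_scheme \<Rightarrow> ('a \<Rightarrow> letter list) \<Rightarrow> bool" where
  "nonabelian_image G h =
     (\<exists>x \<in> carrier G. \<exists>y \<in> carrier G. h x \<otimes>\<^bsub>F2\<^esub> h y \<noteq> h y \<otimes>\<^bsub>F2\<^esub> h x)"

definition RFna_kernel :: "('a, 'b) monoid_scheme \<Rightarrow> 'a set" where
  "RFna_kernel G = carrier G \<inter>
     (\<Inter>h \<in> {h \<in> hom G F2. nonabelian_image G h}. kernel G F2 h)"

definition RF :: "('a, 'b) monoid_scheme \<Rightarrow> 'a set monoid" where
  "RF G = G Mod (RF_kernel G)"

definition RFna :: "('a, 'b) monoid_scheme \<Rightarrow> 'a set monoid" where
  "RFna G = G Mod (RFna_kernel G)"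

definition induced_quot ::
  "('a, 'b) monoid_scheme \<Rightarrow> ('c, 'd) monoid_scheme \<Rightarrow> 'a set \<Rightarrow> 'c set \<Rightarrow> ('a \<Rightarrow> 'c)
     \<Rightarrow> 'a set \<Rightarrow> 'c set" where
  "induced_quot G H K L f = (\<lambda>C. L #>\<^bsub>H\<^esub> f (SOME g. g \<in> C \<and> g \<in> carrier G))"

definition f_RF :: "('a, 'b) monoid_scheme \<Rightarrow> ('c, 'd) monoid_scheme \<Rightarrow> ('a \<Rightarrow> 'c)
     \<Rightarrow> 'a set \<Rightarrow> 'c set" where
  "f_RF G H f = induced_quot G H (RF_kernel G) (RF_kernel H) f"

definition f_na :: "('a, 'b) monoid_scheme \<Rightarrow> ('c, 'd) monoid_scheme \<Rightarrow> ('a \<Rightarrow> 'c)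
     \<Rightarrow> 'a set \<Rightarrow> 'c set" where
  "f_na G H f = induced_quot G H (RFna_kernel G) (RFna_kernel H) f"

definition finitely_generated :: "('a, 'b) monoid_scheme \<Rightarrow> bool" where
  "finitely_generated G = (\<exists>S. finite S \<and> S \<subseteq> carrier G \<and> generate G S = carrier G)"

text \<open>H_1(G,Z) is the abelianization G/[G,G].\<close>
definition abelianization :: "('a, 'b) monoid_scheme \<Rightarrow> 'a set monoid" where
  "abelianization G = G Mod (derived G (carrier G))"

definition Z_independent :: "('a, 'b) monoid_scheme \<Rightarrow> 'a set \<Rightarrow> bool" where
  "Z_independent A S = (\<forall>c :: 'a \<Rightarrow> int.
      finprod A (\<lambda>s. s [^]\<^bsub>A\<^esub> c s) S = \<one>\<^bsub>A\<^esub> \<longrightarrow> (\<forall>s \<in> S. c s = 0))"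

definition torsion_free_rank :: "('a, 'b) monoid_scheme \<Rightarrow> nat" where
  "torsion_free_rank A =
     Sup (card ` {S. finite S \<and> S \<subseteq> carrier A \<and> Z_independent A S})"

definition b1 :: "('a, 'b) monoid_scheme \<Rightarrow> nat" where
  "b1 G = torsion_free_rank (abelianization G)"

end

theory Submission
  imports Defs
begin

lemma inv_inv_letter[simp]: "inv_letter (inv_letter a) = a"
  by (simp add: inv_letter_def)

lemma inv_letter_neq[simp]: "inv_letter a \<noteq> a" "a \<noteq> inv_letter a"
  by (cases a; simp add: inv_letter_def)+

lemma reduced_tl: "reduced_word (a # w) \<Longrightarrow> reduced_word w"
  by (cases w) auto

lemma cons_red_reduced: "reduced_word w \<Longrightarrow> reduced_word (cons_red a w)"
  by (cases w) (auto simp: cons_red_def intro: reduced_tl)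

lemma foldr_reduced: "reduced_word y \<Longrightarrow> reduced_word (foldr cons_red x y)"
  by (induction x) (auto intro: cons_red_reduced)

lemma cons_red_cancel: "reduced_word w \<Longrightarrow> cons_red a (cons_red (inv_letter a) w) = w"
proof (cases w)
  case Nil then show ?thesis by (simp add: cons_red_def)
next
  case (Cons b w')
  assume r: "reduced_word w"
  show ?thesis
  proof (cases "b = a")
    case True
    then show ?thesis using r Cons by (cases w') (auto simp: cons_red_def)
  next
    case False
    then show ?thesis using Cons by (auto simp: cons_red_def)
  qed
qed

lemma foldr_cons_red: "reduced_word z \<Longrightarrow>
  foldr cons_red (cons_red a w) z = cons_red a (foldr cons_red w z)"
proof (cases w)
  case Nil then show ?thesis by (simp add: cons_red_def)
next
  case (Cons b w')
  assume z: "reduced_word z"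
  show ?thesis
  proof (cases "b = inv_letter a")
    case True
    have "cons_red a (cons_red b (foldr cons_red w' z)) = foldr cons_red w' z"
      using True cons_red_cancel foldr_reduced z by blast
    then show ?thesis using Cons True by (simp add: cons_red_def)
  next
    case False
    then show ?thesis using Cons by (simp add: cons_red_def)
  qed
qed

lemma foldr_assoc: "reduced_word z \<Longrightarrow>
  foldr cons_red (foldr cons_red x y) z = foldr cons_red x (foldr cons_red y z)"
  by (induction x) (auto simp: foldr_cons_red)

lemma foldr_nil: "reduced_word x \<Longrightarrow> foldr cons_red x [] = x"
proof (induction x)
  case Nil then show ?case by simp
next
  case (Cons a x)
  then have "reduced_word x" using reduced_tl by blast
  with Cons show ?case by (cases x) (auto simp: cons_red_def)
qed

lemma foldr_inv: "reduced_word x \<Longrightarrow> foldr cons_red (rev (map inv_letter x)) x = []"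
proof (induction x)
  case Nil then show ?case by simp
next
  case (Cons a x)
  then have r: "reduced_word x" using reduced_tl by blast
  have "foldr cons_red (rev (map inv_letter (a # x))) (a # x)
     = foldr cons_red (rev (map inv_letter x)) (cons_red (inv_letter a) (a # x))" by simp
  also have "cons_red (inv_letter a) (a # x) = x" by (simp add: cons_red_def)
  finally show ?case using Cons r by simp
qed

lemma F2_group: "group F2"
proof (rule groupI)
  fix x assume x: "x \<in> carrier F2"
  let ?y = "foldr cons_red (rev (map inv_letter x)) []"
  have "?y \<otimes>\<^bsub>F2\<^esub> x = []"
    using x by (simp add: F2_def foldr_assoc foldr_inv)
  moreover have "?y \<in> carrier F2" by (simp add: F2_def foldr_reduced)
  ultimately show "\<exists>y\<in>carrier F2. y \<otimes>\<^bsub>F2\<^esub> x = \<one>\<^bsub>F2\<^esub>" by (auto simp: F2_def)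
qed (auto simp: F2_def foldr_reduced foldr_assoc)

interpretation F2: group F2 by (rule F2_group)

lemma F2_simps: "carrier F2 = {w. reduced_word w}" "x \<otimes>\<^bsub>F2\<^esub> y = foldr cons_red x y" "\<one>\<^bsub>F2\<^esub> = []"
  by (auto simp: F2_def)

lemma reduced_Cons_iff: "reduced_word (a # w) \<longleftrightarrow> reduced_word w \<and> (w \<noteq> [] \<longrightarrow> hd w \<noteq> inv_letter a)"
  by (cases w) auto

lemma reduced_append: "reduced_word (xs @ ys) \<longleftrightarrow> reduced_word xs \<and> reduced_word ys \<and>
   (xs \<noteq> [] \<longrightarrow> ys \<noteq> [] \<longrightarrow> hd ys \<noteq> inv_letter (last xs))"
proof (induction xs)
  case Nil then show ?case by simp
next
  case (Cons a xs)
  show ?case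
  proof (cases "xs = []")
    case True then show ?thesis by (simp add: reduced_Cons_iff)
  next
    case False
    then show ?thesis using Cons by (simp add: reduced_Cons_iff) blast
  qed
qed

lemma mult_concat: "reduced_word (x @ y) \<Longrightarrow> foldr cons_red x y = x @ y"
proof (induction x)
  case Nil then show ?case by simp
next
  case (Cons a x)
  then have r: "reduced_word (x @ y)" by (simp add: reduced_Cons_iff)
  then show ?case using Cons by (cases "x @ y") (auto simp: cons_red_def)
qed

lemma decomp: "reduced_word x \<Longrightarrow> x \<noteq> [] \<Longrightarrow>
  \<exists>u v. v \<noteq> [] \<and> hd v \<noteq> inv_letter (last v) \<and> x = u @ v @ rev (map inv_letter u)"
proof (induction "length x" arbitrary: x rule: less_induct)
  case less
  show ?case
  proof (cases "hd x \<noteq> inv_letter (last x)")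
    case True
    then show ?thesis using less.prems by (intro exI[of _ "[]"] exI[of _ x]) auto
  next
    case False
    obtain a y where x: "x = a # y" using less.prems by (cases x) auto
    have "y \<noteq> []" using False x by auto
    then obtain m b where y: "y = m @ [b]" by (cases y rule: rev_cases) auto
    have b: "b = inv_letter a" using False x y by auto
    have "m \<noteq> []" using less.prems(1) x y b by auto
    have "reduced_word m" using less.prems(1) x y by (simp add: reduced_Cons_iff reduced_append)
    from less.hyps[OF _ this \<open>m \<noteq> []\<close>] x y
    obtain u v where "v \<noteq> []" "hd v \<noteq> inv_letter (last v)" "m = u @ v @ rev (map inv_letter u)"
      by auto
    then show ?thesis using x y b
      by (intro exI[of _ "a # u"] exI[of _ v]) auto
  qed
qed

lemma reduced_rep: "v \<noteq> [] \<Longrightarrow> reduced_word v \<Longrightarrow> hd v \<noteq> inv_letter (last v) \<Longrightarrow>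
  reduced_word (concat (replicate (Suc n) v))"
proof (induction n)
  case 0 then show ?case by simp
next
  case (Suc n)
  have "concat (replicate (Suc (Suc n)) v) = v @ concat (replicate (Suc n) v)" by simp
  moreover have "hd (concat (replicate (Suc n) v)) = hd v" using Suc.prems by simp
  ultimately show ?case using Suc by (simp only: reduced_append) auto
qed

lemma concat_rep_comm: "concat (replicate k v) @ v = v @ concat (replicate k v)"
  by (induction k) auto

lemma pow_rep: "v \<noteq> [] \<Longrightarrow> reduced_word v \<Longrightarrow> hd v \<noteq> inv_letter (last v) \<Longrightarrow>
  v [^]\<^bsub>F2\<^esub> (Suc n) = concat (replicate (Suc n) v)"
proof (induction n)
  case 0
  then have "v \<in> carrier F2" by (simp add: F2_simps)
  then show ?case by simp
next
  case (Suc n)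
  have eq: "concat (replicate (Suc n) v) @ v = concat (replicate (Suc (Suc n)) v)"
    by (simp only: concat_rep_comm) simp
  have "v [^]\<^bsub>F2\<^esub> (Suc (Suc n)) = concat (replicate (Suc n) v) \<otimes>\<^bsub>F2\<^esub> v"
    using Suc by simp
  also have "\<dots> = concat (replicate (Suc n) v) @ v"
    unfolding F2_simps
    by (rule mult_concat) (simp only: eq reduced_rep[OF Suc.prems])
  finally show ?case using eq by simp
qed

lemma (in group) conj_pow: "u \<in> carrier G \<Longrightarrow> v \<in> carrier G \<Longrightarrow>
  (u \<otimes> v \<otimes> inv u) [^] (n::nat) = u \<otimes> v [^] n \<otimes> inv u"
proof (induction n)
  case 0 then show ?case by simp
next
  case (Suc n)
  have "(u \<otimes> v \<otimes> inv u) [^] Suc n = (u \<otimes> v [^] n \<otimes> inv u) \<otimes> (u \<otimes> v \<otimes> inv u)"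
    using Suc by simp
  also have "\<dots> = u \<otimes> (v [^] n \<otimes> v) \<otimes> inv u"
  proof -
    have c: "inv u \<otimes> (u \<otimes> y) = y" if "y \<in> carrier G" for y
      using that Suc.prems by (simp add: m_assoc[symmetric])
    show ?thesis using Suc.prems c by (simp add: m_assoc)
  qed
  finally show ?case by simp
qed

lemma F2_torsion_free_nat:
  assumes x: "x \<in> carrier F2" and n: "n > 0" and e: "x [^]\<^bsub>F2\<^esub> (n::nat) = \<one>\<^bsub>F2\<^esub>"
  shows "x = \<one>\<^bsub>F2\<^esub>"
proof (rule ccontr)
  assume "x \<noteq> \<one>\<^bsub>F2\<^esub>"
  then have xr: "reduced_word x" "x \<noteq> []" using x by (auto simp: F2_simps)
  then obtain u v where v: "v \<noteq> []" "hd v \<noteq> inv_letter (last v)"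
     and xe: "x = u @ v @ rev (map inv_letter u)" using decomp by blast
  define iu where "iu = rev (map inv_letter u)"
  have ru: "reduced_word u" and rv: "reduced_word v" and riu: "reduced_word iu"
    and rviu: "reduced_word (v @ iu)"
    using xr(1) unfolding xe iu_def reduced_append by auto
  have uc: "u \<in> carrier F2" and vc: "v \<in> carrier F2" and iuc: "iu \<in> carrier F2"
    using ru rv riu by (auto simp: F2_simps)
  have invu: "inv\<^bsub>F2\<^esub> u = iu"
    using F2.inv_equality[of iu u] uc iuc foldr_inv[OF ru] by (simp add: F2_simps iu_def)
  have "x = u \<otimes>\<^bsub>F2\<^esub> (v \<otimes>\<^bsub>F2\<^esub> iu)"
    using xr(1) rviu unfolding F2_simps xe iu_def by (simp add: mult_concat)
  then have "x = u \<otimes>\<^bsub>F2\<^esub> v \<otimes>\<^bsub>F2\<^esub> inv\<^bsub>F2\<^esub> u"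
    using uc vc iuc invu by (simp add: F2.m_assoc)
  then have "x [^]\<^bsub>F2\<^esub> n = u \<otimes>\<^bsub>F2\<^esub> v [^]\<^bsub>F2\<^esub> n \<otimes>\<^bsub>F2\<^esub> iu"
    using F2.conj_pow[OF uc vc] invu by simp
  moreover obtain m where m: "n = Suc m" using n by (cases n) auto
  define V where "V = concat (replicate (Suc m) v)"
  have pV: "v [^]\<^bsub>F2\<^esub> n = V" using pow_rep[OF v(1) rv v(2)] m V_def by simp
  have rV: "reduced_word V" using reduced_rep[OF v(1) rv v(2)] V_def by simp
  have hV: "hd V = hd v" "last V = last v" "V \<noteq> []" using v(1) V_def
    by (simp, simp flip: replicate_append_same, simp)
  have rViu: "reduced_word (V @ iu)"
    using rviu rV hV v(1) unfolding reduced_append by auto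
  have ruViu: "reduced_word (u @ V @ iu)"
  proof -
    have "hd (V @ iu) = hd v" "hd (v @ iu) = hd v" using hV v(1) by auto
    then show ?thesis
      using xr(1) rViu hV v(1) unfolding xe iu_def[symmetric] reduced_append[of u] by auto
  qed
  have Vc: "V \<in> carrier F2" using rV by (simp add: F2_simps)
  have "u \<otimes>\<^bsub>F2\<^esub> V \<otimes>\<^bsub>F2\<^esub> iu = u @ V @ iu"
    using uc Vc iuc F2.m_assoc[of u V iu] rViu ruViu by (simp add: F2_simps mult_concat)
  ultimately have "x [^]\<^bsub>F2\<^esub> n = u @ V @ iu" using pV by simp
  then show False using e hV by (simp add: F2_simps)
qed

lemma F2_torsion_free:
  assumes x: "x \<in> carrier F2" and n: "n \<noteq> 0" and e: "x [^]\<^bsub>F2\<^esub> (n::int) = \<one>\<^bsub>F2\<^esub>"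
  shows "x = \<one>\<^bsub>F2\<^esub>"
proof (cases "n > 0")
  case True
  then obtain k where k: "n = int k" "k > 0" by (metis pos_int_cases)
  then have "x [^]\<^bsub>F2\<^esub> k = \<one>\<^bsub>F2\<^esub>" using e by (simp add: int_pow_int)
  then show ?thesis using F2_torsion_free_nat[OF x] k by blast
next
  case False
  then obtain k where k: "n = - int k" "k > 0" using n by (metis neg_int_cases linorder_neqE_linordered_idom)
  then have "inv\<^bsub>F2\<^esub> (x [^]\<^bsub>F2\<^esub> (int k)) = \<one>\<^bsub>F2\<^esub>" using e x F2.int_pow_neg by metis
  then have "x [^]\<^bsub>F2\<^esub> k = \<one>\<^bsub>F2\<^esub>" using x by (simp add: int_pow_int)
  then show ?thesis using F2_torsion_free_nat[OF x] k by blast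
qed

lemma zlemma:
  fixes M :: "'a \<Rightarrow> 'b \<Rightarrow> int"
  assumes "finite J" "finite I" "card I > card J"
  shows "\<exists>c. (\<exists>s\<in>I. c s \<noteq> 0) \<and> (\<forall>j\<in>J. (\<Sum>s\<in>I. c s * M s j) = 0)"
  using assms
proof (induction J arbitrary: I M rule: finite_induct)
  case empty
  then obtain s where "s \<in> I" by fastforce
  then show ?case by (intro exI[of _ "\<lambda>_. 1"]) auto
next
  case (insert j J)
  show ?case
  proof (cases "\<forall>s\<in>I. M s j = 0")
    case True
    have "card I > card J" using insert by simp
    from insert.IH[OF insert.prems(1) this] obtain c where
      c: "\<exists>s\<in>I. c s \<noteq> 0" "\<forall>j\<in>J. (\<Sum>s\<in>I. c s * M s j) = 0" by blast
    then show ?thesis using True by (intro exI[of _ c]) auto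
  next
    case False
    then obtain s0 where s0: "s0 \<in> I" "M s0 j \<noteq> 0" by blast
    define a where "a = M s0 j"
    define I' where "I' = I - {s0}"
    have fI': "finite I'" using insert.prems I'_def by simp
    have cI': "card I' > card J" using insert s0 I'_def by (simp add: card_Diff_singleton)
    define M' where "M' = (\<lambda>s k. a * M s k - M s j * M s0 k)"
    from insert.IH[OF fI' cI', of M'] obtain c' where
      c': "\<exists>s\<in>I'. c' s \<noteq> 0" "\<forall>k\<in>J. (\<Sum>s\<in>I'. c' s * M' s k) = 0" by blast
    define c where "c = (\<lambda>s. if s = s0 then - (\<Sum>t\<in>I'. c' t * M t j) else a * c' s)"
    have split: "(\<Sum>s\<in>I. f s) = f s0 + (\<Sum>s\<in>I'. f s)" for f :: "'a \<Rightarrow> int"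
      using s0 insert.prems(1) I'_def by (simp add: sum.remove)
    have cI'eq: "(\<Sum>s\<in>I'. c s * f s) = (\<Sum>s\<in>I'. a * c' s * f s)" for f :: "'a \<Rightarrow> int"
      using I'_def by (intro sum.cong) (auto simp: c_def)
    have "\<forall>k\<in>insert j J. (\<Sum>s\<in>I. c s * M s k) = 0"
    proof
      fix k assume k: "k \<in> insert j J"
      have "(\<Sum>s\<in>I. c s * M s k) = - (\<Sum>t\<in>I'. c' t * M t j) * M s0 k + (\<Sum>s\<in>I'. a * c' s * M s k)"
        by (simp only: split[of "\<lambda>s. c s * M s k"] cI'eq) (simp add: c_def)
      also have "\<dots> = (\<Sum>s\<in>I'. c' s * (a * M s k - M s j * M s0 k))"
        by (simp add: sum_distrib_right sum_subtractf algebra_simps sum_distrib_left)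
      also have "\<dots> = 0"
      proof (cases "k = j")
        case True then show ?thesis by (simp add: a_def algebra_simps)
      next
        case False then have "k \<in> J" using k by simp
        then show ?thesis using c'(2) by (simp add: M'_def)
      qed
      finally show "(\<Sum>s\<in>I. c s * M s k) = 0" .
    qed
    moreover obtain s where "s \<in> I'" "c' s \<noteq> 0" using c'(1) by blast
    then have "c s \<noteq> 0" using s0 a_def by (auto simp: c_def I'_def)
    then have "\<exists>s\<in>I. c s \<noteq> 0" using \<open>s \<in> I'\<close> I'_def by blast
    ultimately show ?thesis by blast
  qed
qed

context comm_group
begin

definition P :: "('a \<Rightarrow> int) \<Rightarrow> 'a set \<Rightarrow> 'a" where
  "P c S = finprod G (\<lambda>s. s [^] c s) S"

lemma P_closed[simp]: "S \<subseteq> carrier G \<Longrightarrow> P c S \<in> carrier G"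
  unfolding P_def by (rule finprod_closed) auto

lemma P_mult: "S \<subseteq> carrier G \<Longrightarrow> P c S \<otimes> P d S = P (\<lambda>s. c s + d s) S"
  unfolding P_def by (subst finprod_multf[symmetric]) (auto intro!: finprod_cong' simp: int_pow_mult)

lemma P_zero: "P (\<lambda>s. 0) S = \<one>"
  unfolding P_def by simp

lemma P_cong: "S \<subseteq> carrier G \<Longrightarrow> (\<And>s. s \<in> S \<Longrightarrow> c s = d s) \<Longrightarrow> P c S = P d S"
  unfolding P_def by (rule finprod_cong') auto

lemma P_insert: "finite S \<Longrightarrow> S \<subseteq> carrier G \<Longrightarrow> a \<in> carrier G \<Longrightarrow> a \<notin> S \<Longrightarrow>
   P c (insert a S) = a [^] c a \<otimes> P c S"
  unfolding P_def by (subst finprod_insert) auto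

lemma P_pow: "finite S \<Longrightarrow> S \<subseteq> carrier G \<Longrightarrow> (P c S) [^] (k::int) = P (\<lambda>s. k * c s) S"
proof (induction S rule: finite_induct)
  case empty then show ?case by (simp add: P_def)
next
  case (insert a S)
  then have "(P c (insert a S)) [^] k = (a [^] c a) [^] k \<otimes> (P c S) [^] k"
    by (simp add: P_insert int_pow_distrib)
  also have "\<dots> = a [^] (k * c a) \<otimes> P (\<lambda>s. k * c s) S"
    using insert by (simp add: int_pow_pow mult.commute)
  finally show ?case using insert by (simp add: P_insert)
qed

lemma P_inv: "S \<subseteq> carrier G \<Longrightarrow> inv (P c S) = P (\<lambda>s. - c s) S"
proof -
  assume S: "S \<subseteq> carrier G"
  have "P (\<lambda>s. - c s) S \<otimes> P c S = \<one>" using S by (simp add: P_mult P_zero)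
  then show ?thesis using S by (simp add: inv_equality)
qed

lemma indep_zero:
  assumes "Z_independent G S" "S \<subseteq> carrier G" "P c S = \<one>" "s \<in> S"
  shows "c s = 0"
proof -
  have "finprod G (\<lambda>s. s [^] c s) S = \<one> \<longrightarrow> (\<forall>s\<in>S. c s = 0)"
    using assms(1) unfolding Z_independent_def by (rule spec)
  then show ?thesis using assms(3,4) unfolding P_def by blast
qed

lemma indep_eq:
  assumes "Z_independent G S" "S \<subseteq> carrier G" "P c S = P d S" "s \<in> S"
  shows "c s = d s"
proof -
  have 1: "P (\<lambda>s. c s + - d s) S = P c S \<otimes> P (\<lambda>s. - d s) S"
    by (rule P_mult[symmetric, OF assms(2)])
  have 2: "P (\<lambda>s. - d s) S = inv (P d S)" by (rule P_inv[symmetric, OF assms(2)])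
  have "P c S \<otimes> inv (P d S) = \<one>" using assms(2,3) by (metis P_closed r_inv)
  then have "P (\<lambda>s. c s + - d s) S = \<one>" using 1 2 by simp
  then have "c s + - d s = 0" using indep_zero[OF assms(1,2) _ assms(4)] by blast
  then show ?thesis by simp
qed

lemma P_indicator: "finite S \<Longrightarrow> S \<subseteq> carrier G \<Longrightarrow> a \<in> S \<Longrightarrow> P (\<lambda>s. if s = a then 1 else 0) S = a"
proof -
  assume a: "finite S" "S \<subseteq> carrier G" "a \<in> S"
  have "P (\<lambda>s. if s = a then 1 else 0) S = finprod G (\<lambda>s. if a = s then s else \<one>) S"
    unfolding P_def
  proof (rule finprod_cong')
    show "(\<lambda>s. if a = s then s else \<one>) \<in> S \<rightarrow> carrier G" using a by auto
    fix s assume "s \<in> S"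
    then show "s [^] (if s = a then 1 else 0 :: int) = (if a = s then s else \<one>)"
      using a by (cases "s = a") auto
  qed simp
  also have "\<dots> = a" using a by (intro finprod_singleton) auto
  finally show ?thesis .
qed

lemma P_sum: "finite S \<Longrightarrow> Gs \<subseteq> carrier G \<Longrightarrow>
  finprod G (\<lambda>s. P (E s) Gs) S = P (\<lambda>j. \<Sum>s\<in>S. E s j) Gs"
proof (induction S rule: finite_induct)
  case empty then show ?case using P_zero by simp
next
  case (insert a S)
  then show ?case by (simp add: P_mult)
qed

lemma gen_P:
  assumes Gs: "finite Gs" "Gs \<subseteq> carrier G"
  shows "y \<in> generate G Gs \<Longrightarrow> \<exists>M. y = P M Gs"
proof (induction y rule: generate.induct)
  case one then show ?case using P_zero by metis
next
  case (incl h) then show ?case using P_indicator[OF Gs] by metis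
next
  case (inv h)
  then have "inv h = inv (P (\<lambda>s. if s = h then 1 else 0) Gs)" using P_indicator[OF Gs] by metis
  then show ?case using Gs P_inv by metis
next
  case (eng h1 h2)
  then obtain M1 M2 where "h1 = P M1 Gs" "h2 = P M2 Gs" by blast
  then show ?case using Gs P_mult by metis
qed

lemma indep_card_le:
  assumes Gs: "finite Gs" "Gs \<subseteq> carrier G" "generate G Gs = carrier G"
    and S: "finite S" "S \<subseteq> carrier G" "Z_independent G S"
  shows "card S \<le> card Gs"
proof (rule ccontr)
  assume "\<not> card S \<le> card Gs"
  then have lt: "card S > card Gs" by simp
  have "\<forall>s\<in>S. \<exists>M. s = P M Gs" using gen_P Gs S by blast
  then obtain M where M: "\<forall>s\<in>S. s = P (M s) Gs" by metis
  from zlemma[OF Gs(1) S(1) lt, of M] obtain c where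
    c: "\<exists>s\<in>S. c s \<noteq> 0" "\<forall>j\<in>Gs. (\<Sum>s\<in>S. c s * M s j) = 0" by blast
  have "P c S = finprod G (\<lambda>s. P (\<lambda>j. c s * M s j) Gs) S"
    unfolding P_def
  proof (rule finprod_cong')
    show "s [^] c s = finprod G (\<lambda>j. j [^] (c s * M s j)) Gs" if "s \<in> S" for s
    proof -
      have e: "s = P (M s) Gs" using M that by blast
      have "(P (M s) Gs) [^] c s = s [^] c s" by (simp only: e[symmetric])
      moreover have "(P (M s) Gs) [^] c s = P (\<lambda>j. c s * M s j) Gs" using Gs by (simp add: P_pow)
      ultimately show ?thesis by (simp add: P_def)
    qed
  qed (use Gs in \<open>auto intro!: finprod_closed\<close>)
  also have "\<dots> = P (\<lambda>j. \<Sum>s\<in>S. c s * M s j) Gs" using S Gs by (simp add: P_sum)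
  also have "\<dots> = P (\<lambda>j. 0) Gs" using c(2) Gs by (intro P_cong) auto
  also have "\<dots> = \<one>" by (simp add: P_zero)
  finally show False using c(1) indep_zero S by blast
qed

end

context comm_group
begin

lemma empty_indep: "Z_independent G {}"
  by (simp add: Z_independent_def)

lemma rank_bdd:
  assumes "finitely_generated G"
  shows "card ` {S. finite S \<and> S \<subseteq> carrier G \<and> Z_independent G S} \<subseteq> {..(SOME n. \<exists>Gs. finite Gs \<and> Gs \<subseteq> carrier G \<and> generate G Gs = carrier G \<and> card Gs = n)}"
proof -
  obtain Gs where Gs: "finite Gs" "Gs \<subseteq> carrier G" "generate G Gs = carrier G"
    using assms unfolding finitely_generated_def by blast
  define n where "n = (SOME n. \<exists>Gs. finite Gs \<and> Gs \<subseteq> carrier G \<and> generate G Gs = carrier G \<and> card Gs = n)"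
  have "\<exists>Gs. finite Gs \<and> Gs \<subseteq> carrier G \<and> generate G Gs = carrier G \<and> card Gs = n"
    unfolding n_def by (rule someI_ex) (use Gs in blast)
  then obtain Gs' where "finite Gs'" "Gs' \<subseteq> carrier G" "generate G Gs' = carrier G" "card Gs' = n"
    by blast
  then show ?thesis using indep_card_le unfolding n_def[symmetric] by fastforce
qed

lemma rank_fin: "finitely_generated G \<Longrightarrow>
   finite (card ` {S. finite S \<and> S \<subseteq> carrier G \<and> Z_independent G S})"
  using rank_bdd finite_subset by blast

lemma rank_ge:
  assumes "finitely_generated G" "finite S" "S \<subseteq> carrier G" "Z_independent G S"
  shows "card S \<le> torsion_free_rank G"
  unfolding torsion_free_rank_def
  by (rule cSup_upper) (use assms rank_fin in \<open>auto intro: bdd_above_finite\<close>)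

lemma rank_attained:
  assumes "finitely_generated G"
  shows "\<exists>S. finite S \<and> S \<subseteq> carrier G \<and> Z_independent G S \<and> card S = torsion_free_rank G"
proof -
  let ?X = "card ` {S. finite S \<and> S \<subseteq> carrier G \<and> Z_independent G S}"
  have f: "finite ?X" using rank_fin assms by blast
  have ne: "?X \<noteq> {}" using empty_indep by blast
  have "torsion_free_rank G = Max ?X" unfolding torsion_free_rank_def using cSup_eq_Max[OF f ne] .
  moreover have "Max ?X \<in> ?X" using Max_in[OF f ne] .
  ultimately show ?thesis by auto
qed

lemma single_indep_iff: "x \<in> carrier G \<Longrightarrow> Z_independent G {x} \<longleftrightarrow> (\<forall>n::int. x [^] n = \<one> \<longrightarrow> n = 0)"
proof
  assume x: "x \<in> carrier G" and I: "Z_independent G {x}"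
  show "\<forall>n::int. x [^] n = \<one> \<longrightarrow> n = 0"
  proof (intro allI impI)
    fix n :: int assume "x [^] n = \<one>"
    then have "P (\<lambda>_. n) {x} = \<one>" using x by (simp add: P_def)
    then show "n = 0" using indep_zero[OF I _ _ , of "\<lambda>_. n" x] x by simp
  qed
next
  assume x: "x \<in> carrier G" and H: "\<forall>n::int. x [^] n = \<one> \<longrightarrow> n = 0"
  show "Z_independent G {x}" unfolding Z_independent_def using x H by simp
qed

end

context comm_group
begin

lemma detect:
  assumes fg: "finitely_generated G" and x: "x \<in> carrier G" and xi: "Z_independent G {x}"
  shows "\<exists>\<psi>::'a \<Rightarrow> int. (\<forall>a\<in>carrier G. \<forall>b\<in>carrier G. \<psi> (a \<otimes> b) = \<psi> a + \<psi> b) \<and> \<psi> x \<noteq> 0"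
proof -
  obtain Gs where Gs: "finite Gs" "Gs \<subseteq> carrier G" "generate G Gs = carrier G"
    using fg unfolding finitely_generated_def by blast
  define F where "F = {S. finite S \<and> S \<subseteq> carrier G \<and> x \<in> S \<and> Z_independent G S}"
  have xF: "{x} \<in> F" using x xi by (simp add: F_def)
  have bd: "\<forall>y. (\<exists>S\<in>F. card S = y) \<longrightarrow> y \<le> card Gs"
    using indep_card_le[OF Gs] by (auto simp: F_def)
  obtain k where k: "\<exists>S\<in>F. card S = k" "\<forall>y. (\<exists>S\<in>F. card S = y) \<longrightarrow> y \<le> k"
    using Nat.ex_has_greatest_nat[of "\<lambda>k. \<exists>S\<in>F. card S = k" 1 "card Gs"] xF bd by force
  then obtain S where S: "finite S" "S \<subseteq> carrier G" "x \<in> S" "Z_independent G S" "card S = k"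
    by (auto simp: F_def)
  have span: "\<exists>n c. n \<noteq> 0 \<and> a [^] (n::int) = P c S" if a: "a \<in> carrier G" for a
  proof (cases "a \<in> S")
    case True
    then show ?thesis using P_indicator[OF S(1,2) True] a
      by (intro exI[of _ 1] exI[of _ "\<lambda>s. if s = a then 1 else 0"]) auto
  next
    case False
    have "card (insert a S) = k + 1" using False S by simp
    have "insert a S \<notin> F"
    proof
      assume "insert a S \<in> F"
      then have "k + 1 \<le> k" using k(2) \<open>card (insert a S) = k + 1\<close> by blast
      then show False by simp
    qed
    then have "\<not> Z_independent G (insert a S)" using S a by (simp add: F_def)
    then obtain c :: "'a \<Rightarrow> int" where c0: "finprod G (\<lambda>s. s [^] c s) (insert a S) = \<one>" "\<exists>s\<in>insert a S. c s \<noteq> 0"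
      unfolding Z_independent_def by blast
    then have c: "P c (insert a S) = \<one>" "\<exists>s\<in>insert a S. c s \<noteq> 0" unfolding P_def by auto
    have e: "a [^] c a \<otimes> P c S = \<one>" using c(1) P_insert[OF S(1,2) a False] by simp
    have "c a \<noteq> 0"
    proof
      assume "c a = 0"
      then have "P c S = \<one>" using e S a by simp
      then have "\<forall>s\<in>S. c s = 0" using indep_zero[OF S(4) S(2), of c] by simp
      then show False using c(2) \<open>c a = 0\<close> by blast
    qed
    moreover have "inv (P c S) = a [^] c a" using e S a by (intro inv_equality) auto
    then have "a [^] c a = P (\<lambda>s. - c s) S" using P_inv[OF S(2)] by simp
    ultimately show ?thesis by (intro exI[of _ "c a"] exI[of _ "\<lambda>s. - c s"]) simp
  qed
  have "\<forall>a\<in>carrier G. \<exists>nc. fst nc \<noteq> 0 \<and> a [^] (fst nc :: int) = P (snd nc) S"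
  proof
    fix a assume "a \<in> carrier G"
    from span[OF this] obtain n c where "n \<noteq> 0" "a [^] (n::int) = P c S" by blast
    then show "\<exists>nc. fst nc \<noteq> 0 \<and> a [^] (fst nc :: int) = P (snd nc) S"
      by (intro exI[of _ "(n, c)"]) simp
  qed
  from bchoice[OF this] obtain R where
    R: "\<forall>a\<in>carrier G. fst (R a) \<noteq> 0 \<and> a [^] (fst (R a) :: int) = P (snd (R a)) S" by blast
  define N where "N a = fst (R a)" for a
  define C where "C a = snd (R a)" for a
  have NC: "N a \<noteq> 0 \<and> a [^] (N a) = P (C a) S" if "a \<in> carrier G" for a
    using R that unfolding N_def C_def by blast
  have W: "c x * m = d x * n"
    if a: "a \<in> carrier G" and h: "n \<noteq> 0" "a [^] n = P c S" "m \<noteq> 0" "a [^] m = P d S"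
    for a n m c d
  proof -
    have "a [^] (n * m) = P (\<lambda>s. m * c s) S"
      using h a S by (simp add: int_pow_pow[symmetric] P_pow)
    moreover have "a [^] (m * n) = P (\<lambda>s. n * d s) S"
      using h a S by (simp add: int_pow_pow[symmetric] P_pow)
    ultimately have "P (\<lambda>s. m * c s) S = P (\<lambda>s. n * d s) S" by (simp add: mult.commute)
    then have "m * c x = n * d x" using indep_eq[OF S(4) S(2) _ S(3)] by blast
    then show ?thesis by (simp add: mult.commute)
  qed
  define \<phi> where "\<phi> a = (of_int (C a x) / of_int (N a) :: rat)" for a
  have \<phi>_eq: "\<phi> a = of_int (c x) / of_int n"
    if a: "a \<in> carrier G" and h: "n \<noteq> 0" "a [^] n = P c S" for a n c
  proof -
    have "C a x * n = c x * N a" using W[OF a _ _ h] NC[OF a] by blast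
    then have "rat_of_int (C a x) * of_int n = of_int (c x) * of_int (N a)"
      by (metis of_int_mult)
    then show ?thesis using h(1) NC[OF a] unfolding \<phi>_def by (simp add: field_simps)
  qed
  have \<phi>_add: "\<phi> (a \<otimes> b) = \<phi> a + \<phi> b" if a: "a \<in> carrier G" and b: "b \<in> carrier G" for a b
  proof -
    let ?n = "N a" and ?m = "N b"
    have "(a \<otimes> b) [^] (?n * ?m) = a [^] (?n * ?m) \<otimes> b [^] (?m * ?n)"
      using a b by (simp add: int_pow_distrib mult.commute)
    also have "\<dots> = (a [^] ?n) [^] ?m \<otimes> (b [^] ?m) [^] ?n"
      using a b by (simp add: int_pow_pow)
    also have "\<dots> = P (\<lambda>s. ?m * C a s) S \<otimes> P (\<lambda>s. ?n * C b s) S"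
      using NC[OF a] NC[OF b] S by (simp add: P_pow)
    also have "\<dots> = P (\<lambda>s. ?m * C a s + ?n * C b s) S"
      using S by (simp add: P_mult)
    finally have "\<phi> (a \<otimes> b) = of_int (?m * C a x + ?n * C b x) / of_int (?n * ?m)"
      using a b NC[OF a] NC[OF b] by (intro \<phi>_eq) auto
    then show ?thesis using NC[OF a] NC[OF b] unfolding \<phi>_def by (simp add: field_simps)
  qed
  have \<phi>x: "\<phi> x = 1"
  proof -
    have "x [^] (1::int) = P (\<lambda>s. if s = x then 1 else 0) S"
      using P_indicator[OF S(1,2,3)] x by simp
    then show ?thesis using \<phi>_eq[OF x, of 1] by simp
  qed
  have \<phi>1: "\<phi> \<one> = 0" using \<phi>_add[of \<one> \<one>] by simp
  have \<phi>inv: "\<phi> (inv a) = - \<phi> a" if "a \<in> carrier G" for a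
    using \<phi>_add[of a "inv a"] that \<phi>1 by simp
  define D where "D = prod N Gs"
  have D0: "D \<noteq> 0" unfolding D_def using NC Gs by (auto simp: prod_zero_iff)
  have DGs: "rat_of_int D * \<phi> g \<in> \<int>" if g: "g \<in> Gs" for g
  proof -
    have gc: "g \<in> carrier G" using g Gs by auto
    have "D = N g * prod N (Gs - {g})" unfolding D_def using g Gs by (simp add: prod.remove)
    then have "rat_of_int D * \<phi> g = of_int (prod N (Gs - {g}) * C g x)"
      unfolding \<phi>_def using NC[OF gc] by (simp add: field_simps)
    then show ?thesis by (metis Ints_of_int)
  qed
  have Dall: "rat_of_int D * \<phi> a \<in> \<int>" if "a \<in> generate G Gs" for a
    using that
  proof (induction a rule: generate.induct)
    case one then show ?case using \<phi>1 by simp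
  next
    case (incl h) then show ?case using DGs by blast
  next
    case (inv h)
    then have "rat_of_int D * \<phi> (inv h) = - (rat_of_int D * \<phi> h)" using \<phi>inv Gs by auto
    then show ?case using DGs[OF inv] by simp
  next
    case (eng h1 h2)
    then have "h1 \<in> carrier G" "h2 \<in> carrier G" using Gs by auto
    then have "rat_of_int D * \<phi> (h1 \<otimes> h2) = rat_of_int D * \<phi> h1 + rat_of_int D * \<phi> h2"
      using \<phi>_add by (simp add: distrib_left)
    then show ?case using eng by simp
  qed
  define \<psi> where "\<psi> a = \<lfloor>rat_of_int D * \<phi> a\<rfloor>" for a
  have \<psi>_of: "of_int (\<psi> a) = rat_of_int D * \<phi> a" if "a \<in> carrier G" for a
    using Dall[of a] that Gs(3) unfolding \<psi>_def by (metis Ints_cases floor_of_int)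
  have "\<forall>a\<in>carrier G. \<forall>b\<in>carrier G. \<psi> (a \<otimes> b) = \<psi> a + \<psi> b"
  proof (intro ballI)
    fix a b assume ab: "a \<in> carrier G" "b \<in> carrier G"
    have "rat_of_int (\<psi> (a \<otimes> b)) = rat_of_int (\<psi> a + \<psi> b)"
      using ab \<psi>_of \<phi>_add by (simp add: distrib_left)
    then show "\<psi> (a \<otimes> b) = \<psi> a + \<psi> b" by (metis of_int_eq_iff)
  qed
  moreover have "\<psi> x \<noteq> 0"
  proof -
    have "rat_of_int (\<psi> x) = rat_of_int D" using \<psi>_of[OF x] \<phi>x by simp
    then show ?thesis using D0 by simp
  qed
  ultimately show ?thesis by blast
qed

end

lemma (in comm_group) indep_iff_P: "Z_independent G S \<longleftrightarrow> (\<forall>c. P c S = \<one> \<longrightarrow> (\<forall>s\<in>S. c s = 0))"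
  by (simp add: Z_independent_def P_def)

lemma (in comm_group) one_notin_indep:
  assumes "Z_independent G S" "finite S" "S \<subseteq> carrier G"
  shows "\<one> \<notin> S"
proof
  assume o: "\<one> \<in> S"
  have "P (\<lambda>s. if s = \<one> then 1 else 0) S = \<one>" using P_indicator[OF assms(2,3) o] .
  then have "(\<lambda>s. if s = \<one> then 1 else 0 :: int) \<one> = 0" using indep_zero[OF assms(1,3) _ o] by blast
  then show False by simp
qed

locale epi_ab = A: comm_group A + B: comm_group B for A (structure) and B (structure) +
  fixes p
  assumes hom: "p \<in> hom A B" and surj: "p ` carrier A = carrier B"
    and fgA: "finitely_generated A" and fgB: "finitely_generated B"
begin

sublocale h: group_hom A B p
  by (unfold_locales) (rule hom)

lemma hom_P: "finite S \<Longrightarrow> S \<subseteq> carrier A \<Longrightarrow>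
   p (A.P c S) = finprod B (\<lambda>s. p s [^]\<^bsub>B\<^esub> c s) S"
proof (induction S rule: finite_induct)
  case empty then show ?case by (simp add: A.P_def)
next
  case (insert a S)
  then have a: "a \<in> carrier A" and S: "S \<subseteq> carrier A" by auto
  have "p (A.P c (insert a S)) = p (a [^]\<^bsub>A\<^esub> c a) \<otimes>\<^bsub>B\<^esub> p (A.P c S)"
    using insert a S by (simp add: A.P_insert)
  also have "\<dots> = p a [^]\<^bsub>B\<^esub> c a \<otimes>\<^bsub>B\<^esub> finprod B (\<lambda>s. p s [^]\<^bsub>B\<^esub> c s) S"
    using insert a S by (simp add: h.hom_int_pow)
  also have "\<dots> = finprod B (\<lambda>s. p s [^]\<^bsub>B\<^esub> c s) (insert a S)"
    using insert a S by (subst B.finprod_insert) (auto simp: Pi_def)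
  finally show ?case .
qed

lemma hom_P_eq: "finite S \<Longrightarrow> S \<subseteq> carrier A \<Longrightarrow>
   p (A.P c S) = B.P (\<lambda>t. c (inv_into S p t)) (p ` S)" if "inj_on p S"
proof -
  assume S: "finite S" "S \<subseteq> carrier A"
  have "B.P (\<lambda>t. c (inv_into S p t)) (p ` S) = finprod B (\<lambda>s. p s [^]\<^bsub>B\<^esub> c (inv_into S p (p s))) S"
    unfolding B.P_def using S that by (subst B.finprod_reindex) (auto simp: Pi_def)
  also have "\<dots> = finprod B (\<lambda>s. p s [^]\<^bsub>B\<^esub> c s) S"
    using S that by (intro B.finprod_cong') (auto simp: Pi_def)
  finally show ?thesis using hom_P[OF S] by simp
qed

lemma lift:
  assumes T: "finite T" "T \<subseteq> carrier B" "Z_independent B T"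
  shows "\<exists>S'. finite S' \<and> S' \<subseteq> carrier A \<and> card S' = card T \<and> Z_independent A S' \<and>
     (\<forall>y\<in>carrier A. p y = \<one>\<^bsub>B\<^esub> \<longrightarrow> Z_independent A {y} \<longrightarrow> y \<notin> S' \<and> Z_independent A (insert y S'))"
proof -
  have "\<forall>t\<in>T. \<exists>a. a \<in> carrier A \<and> p a = t"
  proof
    fix t assume "t \<in> T"
    then have "t \<in> carrier B" using T(2) by (rule subsetD[rotated])
    then have "t \<in> p ` carrier A" using surj by simp
    then show "\<exists>a. a \<in> carrier A \<and> p a = t" by (auto simp: image_iff)
  qed
  from bchoice[OF this] obtain \<sigma> where \<sigma>: "\<forall>t\<in>T. \<sigma> t \<in> carrier A \<and> p (\<sigma> t) = t" by blast
  have inj: "inj_on \<sigma> T"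
  proof (rule inj_onI)
    fix s t assume st: "s \<in> T" "t \<in> T" "\<sigma> s = \<sigma> t"
    then have "p (\<sigma> s) = p (\<sigma> t)" by simp
    then show "s = t" using \<sigma> st(1,2) by metis
  qed
  define S' where "S' = \<sigma> ` T"
  have S'c: "S' \<subseteq> carrier A" "finite S'" using \<sigma> T by (auto simp: S'_def)
  have card: "card S' = card T" using card_image[OF inj] S'_def by simp
  have key: "\<forall>s\<in>S'. c s = 0" if h1: "p (A.P c S') = \<one>\<^bsub>B\<^esub>" for c
  proof -
    have "p (A.P c S') = finprod B (\<lambda>s. p s [^]\<^bsub>B\<^esub> c s) (\<sigma> ` T)"
      using hom_P[OF S'c(2,1)] S'_def by simp
    also have "\<dots> = finprod B (\<lambda>t. p (\<sigma> t) [^]\<^bsub>B\<^esub> c (\<sigma> t)) T"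
      using inj \<sigma> T(2) by (subst B.finprod_reindex) (auto simp: Pi_def intro!: B.int_pow_closed)
    also have "\<dots> = B.P (\<lambda>t. c (\<sigma> t)) T"
      unfolding B.P_def using \<sigma> T by (intro B.finprod_cong') (auto simp: Pi_def)
    finally have "B.P (\<lambda>t. c (\<sigma> t)) T = \<one>\<^bsub>B\<^esub>" using h1 by simp
    then have "\<forall>t\<in>T. c (\<sigma> t) = 0" using B.indep_zero[OF T(3,2), of "\<lambda>t. c (\<sigma> t)"] by simp
    then show ?thesis by (simp add: S'_def)
  qed
  have indep: "Z_independent A S'"
    unfolding A.indep_iff_P
  proof (intro allI impI)
    fix c assume "A.P c S' = \<one>\<^bsub>A\<^esub>"
    then have "p (A.P c S') = \<one>\<^bsub>B\<^esub>" by simp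
    then show "\<forall>s\<in>S'. c s = 0" using key by blast
  qed
  have ext: "y \<notin> S' \<and> Z_independent A (insert y S')"
    if y: "y \<in> carrier A" "p y = \<one>\<^bsub>B\<^esub>" "Z_independent A {y}" for y
  proof
    have "\<one>\<^bsub>B\<^esub> \<notin> T" using B.one_notin_indep[OF T(3,1,2)] .
    then show yn: "y \<notin> S'" using y \<sigma> by (auto simp: S'_def)
    show "Z_independent A (insert y S')"
      unfolding A.indep_iff_P
    proof (intro allI impI)
      fix c assume c: "A.P c (insert y S') = \<one>\<^bsub>A\<^esub>"
      then have e: "y [^]\<^bsub>A\<^esub> c y \<otimes>\<^bsub>A\<^esub> A.P c S' = \<one>\<^bsub>A\<^esub>"
        using A.P_insert[OF S'c(2,1) y(1) yn] by simp
      then have "p (y [^]\<^bsub>A\<^esub> c y \<otimes>\<^bsub>A\<^esub> A.P c S') = \<one>\<^bsub>B\<^esub>" by simp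
      then have "p (y [^]\<^bsub>A\<^esub> c y) \<otimes>\<^bsub>B\<^esub> p (A.P c S') = \<one>\<^bsub>B\<^esub>"
        using y(1) S'c(1) by (simp add: h.hom_mult)
      then have "p (A.P c S') = \<one>\<^bsub>B\<^esub>" using y S'c by (simp add: h.hom_int_pow)
      then have z: "\<forall>s\<in>S'. c s = 0" using key by blast
      then have "A.P c S' = \<one>\<^bsub>A\<^esub>" using A.P_cong[OF S'c(1), of c "\<lambda>_. 0"] A.P_zero by simp
      then have "y [^]\<^bsub>A\<^esub> c y = \<one>\<^bsub>A\<^esub>" using e y by simp
      then have "c y = 0" using A.single_indep_iff[OF y(1)] y(3) by blast
      then show "\<forall>s\<in>insert y S'. c s = 0" using z by simp
    qed
  qed
  show ?thesis using S'c card indep ext by blast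
qed

lemma rank_le1: "torsion_free_rank B \<le> torsion_free_rank A"
proof -
  obtain T where T: "finite T" "T \<subseteq> carrier B" "Z_independent B T" "card T = torsion_free_rank B"
    using B.rank_attained[OF fgB] by blast
  from lift[OF T(1-3)] obtain S' where "finite S'" "S' \<subseteq> carrier A" "card S' = card T" "Z_independent A S'"
    by blast
  then show ?thesis using A.rank_ge[OF fgA] T(4) by metis
qed

lemma rank_lt:
  assumes y: "y \<in> carrier A" "p y = \<one>\<^bsub>B\<^esub>" "Z_independent A {y}"
  shows "torsion_free_rank B < torsion_free_rank A"
proof -
  obtain T where T: "finite T" "T \<subseteq> carrier B" "Z_independent B T" "card T = torsion_free_rank B"
    using B.rank_attained[OF fgB] by blast
  from lift[OF T(1-3)] obtain S' where S': "finite S'" "S' \<subseteq> carrier A" "card S' = card T"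
    "y \<notin> S'" "Z_independent A (insert y S')"
    using y by blast
  then have "card (insert y S') \<le> torsion_free_rank A"
    using A.rank_ge[OF fgA, of "insert y S'"] y by simp
  then show ?thesis using S' T(4) by simp
qed

lemma rank_le2:
  assumes tor: "\<forall>y\<in>carrier A. p y = \<one>\<^bsub>B\<^esub> \<longrightarrow> \<not> Z_independent A {y}"
  shows "torsion_free_rank A \<le> torsion_free_rank B"
proof -
  obtain S where S: "finite S" "S \<subseteq> carrier A" "Z_independent A S" "card S = torsion_free_rank A"
    using A.rank_attained[OF fgA] by blast
  have key: "\<forall>s\<in>S. e s = e' s" if h1: "p (A.P e S) = p (A.P e' S)" for e e'
  proof -
    let ?y = "A.P (\<lambda>s. e s + - e' s) S"
    have yc: "?y \<in> carrier A" using S by simp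
    have "?y = A.P e S \<otimes>\<^bsub>A\<^esub> inv\<^bsub>A\<^esub> (A.P e' S)"
      using A.P_mult[OF S(2), of e "\<lambda>s. - e' s"] A.P_inv[OF S(2), of e'] by simp
    then have "p ?y = \<one>\<^bsub>B\<^esub>" using h1 S(2) by (simp add: h.hom_mult h.hom_inv)
    then have "\<not> Z_independent A {?y}" using tor yc by blast
    then obtain n :: int where n: "n \<noteq> 0" "?y [^]\<^bsub>A\<^esub> n = \<one>\<^bsub>A\<^esub>"
      using A.single_indep_iff[OF yc] by blast
    then have "A.P (\<lambda>s. n * (e s + - e' s)) S = \<one>\<^bsub>A\<^esub>" using S by (simp add: A.P_pow)
    then have "\<forall>s\<in>S. n * (e s + - e' s) = 0" using A.indep_zero[OF S(3,2), of "\<lambda>s. n * (e s + - e' s)"] by simp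
    then show ?thesis using n(1) by simp
  qed
  have inj: "inj_on p S"
  proof (rule inj_onI)
    fix s1 s2 assume s: "s1 \<in> S" "s2 \<in> S" "p s1 = p s2"
    have "p (A.P (\<lambda>s. if s = s1 then 1 else 0) S) = p (A.P (\<lambda>s. if s = s2 then 1 else 0) S)"
      using A.P_indicator[OF S(1,2)] s by simp
    then have "(\<lambda>s. if s = s1 then 1 else 0 :: int) s1 = (\<lambda>s. if s = s2 then 1 else 0 :: int) s1"
      using key s(1) by blast
    then show "s1 = s2" by (auto split: if_splits)
  qed
  have "Z_independent B (p ` S)"
    unfolding B.indep_iff_P
  proof (intro allI impI)
    fix c assume c: "B.P c (p ` S) = \<one>\<^bsub>B\<^esub>"
    have "B.P c (p ` S) = B.P (\<lambda>t. c (p (inv_into S p t))) (p ` S)"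
      using S inj by (intro B.P_cong) auto
    also have "\<dots> = p (A.P (\<lambda>s. c (p s)) S)" using hom_P_eq[OF inj S(1,2)] by simp
    finally have "p (A.P (\<lambda>s. c (p s)) S) = p (A.P (\<lambda>s. 0) S)" using c by (simp add: A.P_zero)
    then have "\<forall>s\<in>S. c (p s) = 0" using key by blast
    then show "\<forall>t\<in>p ` S. c t = 0" by blast
  qed
  moreover have "finite (p ` S)" "p ` S \<subseteq> carrier B" using S by auto
  ultimately have "card (p ` S) \<le> torsion_free_rank B" using B.rank_ge[OF fgB] by blast
  then show ?thesis using card_image[OF inj] S(4) by simp
qed

end

lemma induced_val:
  assumes G: "group G" and H: "group H" and K: "K \<lhd> G" and L: "L \<lhd> H"
    and f: "f \<in> hom G H" and KL: "\<forall>k\<in>K. f k \<in> L" and g: "g \<in> carrier G"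
  shows "induced_quot G H K L f (K #>\<^bsub>G\<^esub> g) = L #>\<^bsub>H\<^esub> f g"
proof -
  interpret G: group G by (rule G)
  interpret H: group H by (rule H)
  interpret K: normal K G by (rule K)
  interpret L: normal L H by (rule L)
  interpret fh: group_hom G H f by (unfold_locales) (rule f)
  define g' where "g' = (SOME g'. g' \<in> K #>\<^bsub>G\<^esub> g \<and> g' \<in> carrier G)"
  have "\<exists>g'. g' \<in> K #>\<^bsub>G\<^esub> g \<and> g' \<in> carrier G"
    using G.rcos_self[OF g K.subgroup_axioms] g by blast
  then have g'0: "g' \<in> K #>\<^bsub>G\<^esub> g \<and> g' \<in> carrier G" unfolding g'_def by (rule someI_ex)
  then have g': "g' \<in> K #>\<^bsub>G\<^esub> g" "g' \<in> carrier G" by auto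
  have "g' \<otimes>\<^bsub>G\<^esub> inv\<^bsub>G\<^esub> g \<in> K" using K.rcos_module_imp[OF G g g'(1)] .
  then have "f (g' \<otimes>\<^bsub>G\<^esub> inv\<^bsub>G\<^esub> g) \<in> L" using KL by blast
  then have "f g' \<otimes>\<^bsub>H\<^esub> inv\<^bsub>H\<^esub> f g \<in> L" using g g' by simp
  then have "f g' \<in> L #>\<^bsub>H\<^esub> f g" using L.rcos_module_rev[OF H] g g' by simp
  then have "L #>\<^bsub>H\<^esub> f g = L #>\<^bsub>H\<^esub> f g'"
    using H.repr_independence[OF _ _ L.subgroup_axioms] g by simp
  then show ?thesis unfolding induced_quot_def g'_def[symmetric] by simp
qed

lemma induced_hom:
  assumes G: "group G" and H: "group H" and K: "K \<lhd> G" and L: "L \<lhd> H"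
    and f: "f \<in> hom G H" and KL: "\<forall>k\<in>K. f k \<in> L"
  shows "induced_quot G H K L f \<in> hom (G Mod K) (H Mod L)"
proof -
  interpret G: group G by (rule G)
  interpret H: group H by (rule H)
  interpret K: normal K G by (rule K)
  interpret L: normal L H by (rule L)
  interpret fh: group_hom G H f by (unfold_locales) (rule f)
  note iv = induced_val[OF G H K L f KL]
  show ?thesis
  proof (rule homI)
    fix U assume "U \<in> carrier (G Mod K)"
    then obtain a where a: "a \<in> carrier G" "U = K #>\<^bsub>G\<^esub> a" by (auto simp: carrier_FactGroup)
    then show "induced_quot G H K L f U \<in> carrier (H Mod L)"
      using iv by (auto simp: carrier_FactGroup)
  next
    fix U V assume "U \<in> carrier (G Mod K)" "V \<in> carrier (G Mod K)"
    then obtain a b where a: "a \<in> carrier G" "U = K #>\<^bsub>G\<^esub> a"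
      and b: "b \<in> carrier G" "V = K #>\<^bsub>G\<^esub> b" by (auto simp: carrier_FactGroup)
    have "U \<otimes>\<^bsub>G Mod K\<^esub> V = K #>\<^bsub>G\<^esub> (a \<otimes>\<^bsub>G\<^esub> b)" using a b by (simp add: K.rcos_sum)
    then have "induced_quot G H K L f (U \<otimes>\<^bsub>G Mod K\<^esub> V) = L #>\<^bsub>H\<^esub> (f a \<otimes>\<^bsub>H\<^esub> f b)"
      using iv a b by simp
    also have "\<dots> = induced_quot G H K L f U \<otimes>\<^bsub>H Mod L\<^esub> induced_quot G H K L f V"
      using iv a b by (simp add: L.rcos_sum)
    finally show "induced_quot G H K L f (U \<otimes>\<^bsub>G Mod K\<^esub> V) =
      induced_quot G H K L f U \<otimes>\<^bsub>H Mod L\<^esub> induced_quot G H K L f V" .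
  qed
qed

lemma induced_surj:
  assumes G: "group G" and H: "group H" and K: "K \<lhd> G" and L: "L \<lhd> H"
    and f: "f \<in> hom G H" and KL: "\<forall>k\<in>K. f k \<in> L" and fs: "f ` carrier G = carrier H"
  shows "induced_quot G H K L f ` carrier (G Mod K) = carrier (H Mod L)"
proof -
  note iv = induced_val[OF G H K L f KL]
  show ?thesis
  proof
    show "induced_quot G H K L f ` carrier (G Mod K) \<subseteq> carrier (H Mod L)"
      using induced_hom[OF G H K L f KL] by (auto simp: hom_def)
    show "carrier (H Mod L) \<subseteq> induced_quot G H K L f ` carrier (G Mod K)"
    proof
      fix V assume "V \<in> carrier (H Mod L)"
      then obtain b where b: "b \<in> carrier H" "V = L #>\<^bsub>H\<^esub> b" by (auto simp: carrier_FactGroup)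
      then have "b \<in> f ` carrier G" using fs by simp
      then obtain a where a: "a \<in> carrier G" "f a = b" by blast
      then have "V = induced_quot G H K L f (K #>\<^bsub>G\<^esub> a)" using iv b by simp
      moreover have "K #>\<^bsub>G\<^esub> a \<in> carrier (G Mod K)" using a by (auto simp: carrier_FactGroup)
      ultimately show "V \<in> induced_quot G H K L f ` carrier (G Mod K)" by blast
    qed
  qed
qed

lemma induced_iso:
  assumes G: "group G" and H: "group H" and K: "K \<lhd> G" and L: "L \<lhd> H"
    and f: "f \<in> hom G H" and KL: "\<forall>k\<in>K. f k \<in> L" and fs: "f ` carrier G = carrier H"
  shows "induced_quot G H K L f \<in> iso (G Mod K) (H Mod L) \<longleftrightarrow> (\<forall>g\<in>carrier G. f g \<in> L \<longrightarrow> g \<in> K)"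
proof -
  interpret G: group G by (rule G)
  interpret H: group H by (rule H)
  interpret K: normal K G by (rule K)
  interpret L: normal L H by (rule L)
  interpret fh: group_hom G H f by (unfold_locales) (rule f)
  note iv = induced_val[OF G H K L f KL]
  let ?i = "induced_quot G H K L f"
  show ?thesis
  proof
    assume iso: "?i \<in> iso (G Mod K) (H Mod L)"
    then have inj: "inj_on ?i (carrier (G Mod K))" by (auto simp: iso_def bij_betw_def)
    show "\<forall>g\<in>carrier G. f g \<in> L \<longrightarrow> g \<in> K"
    proof (intro ballI impI)
      fix g assume g: "g \<in> carrier G" and fg: "f g \<in> L"
      have "?i (K #>\<^bsub>G\<^esub> g) = L" using iv g fg L.rcos_const[OF H] by simp
      also have "L = ?i (K #>\<^bsub>G\<^esub> \<one>\<^bsub>G\<^esub>)" using iv L.rcos_const[OF H] by simp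
      finally have "K #>\<^bsub>G\<^esub> g = K #>\<^bsub>G\<^esub> \<one>\<^bsub>G\<^esub>"
        using inj g by (auto simp: carrier_FactGroup inj_on_def)
      then have "K #>\<^bsub>G\<^esub> g = K" using K.rcos_const[OF G] K.one_closed by simp
      then show "g \<in> K" using G.rcos_self[OF g K.subgroup_axioms] by simp
    qed
  next
    assume C: "\<forall>g\<in>carrier G. f g \<in> L \<longrightarrow> g \<in> K"
    have "inj_on ?i (carrier (G Mod K))"
    proof (rule inj_onI)
      fix U V assume "U \<in> carrier (G Mod K)" "V \<in> carrier (G Mod K)" and e: "?i U = ?i V"
      then obtain a b where a: "a \<in> carrier G" "U = K #>\<^bsub>G\<^esub> a"
        and b: "b \<in> carrier G" "V = K #>\<^bsub>G\<^esub> b" by (auto simp: carrier_FactGroup)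
      have "L #>\<^bsub>H\<^esub> f a = L #>\<^bsub>H\<^esub> f b" using e iv a b by simp
      then have "f b \<in> L #>\<^bsub>H\<^esub> f a" using H.repr_independenceD[OF L.subgroup_axioms] b by simp
      then have "f b \<otimes>\<^bsub>H\<^esub> inv\<^bsub>H\<^esub> f a \<in> L" using L.rcos_module_imp[OF H] a by simp
      then have "f (b \<otimes>\<^bsub>G\<^esub> inv\<^bsub>G\<^esub> a) \<in> L" using a b by simp
      then have "b \<otimes>\<^bsub>G\<^esub> inv\<^bsub>G\<^esub> a \<in> K" using C a b by simp
      then have "b \<in> K #>\<^bsub>G\<^esub> a" using K.rcos_module_rev[OF G] a b by simp
      then have "K #>\<^bsub>G\<^esub> a = K #>\<^bsub>G\<^esub> b" using G.repr_independence[OF _ _ K.subgroup_axioms] a by simp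
      then show "U = V" using a b by simp
    qed
    then show "?i \<in> iso (G Mod K) (H Mod L)"
      using induced_hom[OF G H K L f KL] induced_surj[OF G H K L f KL fs]
      by (auto simp: iso_def bij_betw_def)
  qed
qed

lemma hom_kernels_normal:
  assumes G: "group G" and Hs: "Hs \<subseteq> hom G F2"
  shows "normal {g \<in> carrier G. \<forall>h\<in>Hs. h g = \<one>\<^bsub>F2\<^esub>} G"
proof -
  interpret G: group G by (rule G)
  let ?N = "{g \<in> carrier G. \<forall>h\<in>Hs. h g = \<one>\<^bsub>F2\<^esub>}"
  have hh: "group_hom G F2 h" if "h \<in> Hs" for h
  proof -
    have "h \<in> hom G F2" using that Hs by (rule subsetD[rotated])
    then show ?thesis by (intro group_hom.intro G F2_group group_hom_axioms.intro)
  qed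
  have sub: "subgroup ?N G"
  proof (rule G.subgroupI)
    show "?N \<subseteq> carrier G" by blast
    have "\<forall>h\<in>Hs. h \<one>\<^bsub>G\<^esub> = \<one>\<^bsub>F2\<^esub>" using group_hom.hom_one[OF hh] by blast
    then have "\<one>\<^bsub>G\<^esub> \<in> ?N" by simp
    then show "?N \<noteq> {}" by blast
  next
    fix a assume a: "a \<in> ?N"
    have "\<forall>h\<in>Hs. h (inv\<^bsub>G\<^esub> a) = \<one>\<^bsub>F2\<^esub>"
    proof
      fix h assume h: "h \<in> Hs"
      interpret kh: group_hom G F2 h by (rule hh[OF h])
      have "h a = \<one>\<^bsub>F2\<^esub>" "a \<in> carrier G" using a h by auto
      then show "h (inv\<^bsub>G\<^esub> a) = \<one>\<^bsub>F2\<^esub>" by simp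
    qed
    then show "inv\<^bsub>G\<^esub> a \<in> ?N" using a by simp
  next
    fix a b assume a: "a \<in> ?N" and b: "b \<in> ?N"
    have "\<forall>h\<in>Hs. h (a \<otimes>\<^bsub>G\<^esub> b) = \<one>\<^bsub>F2\<^esub>"
    proof
      fix h assume h: "h \<in> Hs"
      interpret kh: group_hom G F2 h by (rule hh[OF h])
      show "h (a \<otimes>\<^bsub>G\<^esub> b) = \<one>\<^bsub>F2\<^esub>" using a b h by simp
    qed
    then show "a \<otimes>\<^bsub>G\<^esub> b \<in> ?N" using a b by simp
  qed
  show ?thesis unfolding G.normal_inv_iff
  proof (intro conjI sub ballI)
    fix x h assume x: "x \<in> carrier G" and h: "h \<in> ?N"
    have "\<forall>k\<in>Hs. k (x \<otimes>\<^bsub>G\<^esub> h \<otimes>\<^bsub>G\<^esub> inv\<^bsub>G\<^esub> x) = \<one>\<^bsub>F2\<^esub>"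
    proof
      fix k assume k: "k \<in> Hs"
      interpret kh: group_hom G F2 k by (rule hh[OF k])
      have "k h = \<one>\<^bsub>F2\<^esub>" "h \<in> carrier G" using h k by auto
      then show "k (x \<otimes>\<^bsub>G\<^esub> h \<otimes>\<^bsub>G\<^esub> inv\<^bsub>G\<^esub> x) = \<one>\<^bsub>F2\<^esub>" using x by simp
    qed
    then show "x \<otimes>\<^bsub>G\<^esub> h \<otimes>\<^bsub>G\<^esub> inv\<^bsub>G\<^esub> x \<in> ?N" using x h by simp
  qed
qed

lemma RF_kernel_eq: "RF_kernel G = {g \<in> carrier G. \<forall>h\<in>hom G F2. h g = \<one>\<^bsub>F2\<^esub>}"
  unfolding RF_kernel_def kernel_def by auto

lemma RFna_kernel_eq: "RFna_kernel G = {g \<in> carrier G. \<forall>h\<in>{h \<in> hom G F2. nonabelian_image G h}. h g = \<one>\<^bsub>F2\<^esub>}"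
  unfolding RFna_kernel_def kernel_def by auto

lemma factor_hom:
  assumes G: "group G" and H: "group H" and f: "f \<in> hom G H" and fs: "f ` carrier G = carrier H"
    and \<phi>: "\<phi> \<in> hom G F2" and ker: "\<forall>k\<in>carrier G. f k = \<one>\<^bsub>H\<^esub> \<longrightarrow> \<phi> k = \<one>\<^bsub>F2\<^esub>"
  shows "\<exists>\<psi>\<in>hom H F2. \<forall>g\<in>carrier G. \<phi> g = \<psi> (f g)"
proof -
  interpret G: group G by (rule G)
  interpret H: group H by (rule H)
  interpret fh: group_hom G H f by (unfold_locales) (rule f)
  interpret ph: group_hom G F2 \<phi> by (unfold_locales) (rule \<phi>)
  define \<psi> where "\<psi> y = \<phi> (inv_into (carrier G) f y)" for y
  have eq: "\<phi> g = \<psi> (f g)" if g: "g \<in> carrier G" for g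
  proof -
    define g' where "g' = inv_into (carrier G) f (f g)"
    have g': "g' \<in> carrier G" "f g' = f g" unfolding g'_def using g by (auto intro: inv_into_into f_inv_into_f)
    have "f (g \<otimes>\<^bsub>G\<^esub> inv\<^bsub>G\<^esub> g') = \<one>\<^bsub>H\<^esub>" using g g' by simp
    then have "\<phi> (g \<otimes>\<^bsub>G\<^esub> inv\<^bsub>G\<^esub> g') = \<one>\<^bsub>F2\<^esub>" using ker g g' by simp
    then have "\<phi> g \<otimes>\<^bsub>F2\<^esub> inv\<^bsub>F2\<^esub> \<phi> g' = \<one>\<^bsub>F2\<^esub>" using g g' by simp
    then have "\<phi> g = \<phi> g'" using g g' by (simp add: F2.r_inv_ex F2.inv_equality F2.inv_inv F2.inv_solve_right')
    then show ?thesis unfolding \<psi>_def g'_def by simp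
  qed
  have "\<psi> \<in> hom H F2"
  proof (rule homI)
    fix x assume "x \<in> carrier H"
    then have "x \<in> f ` carrier G" using fs by simp
    then obtain a where "a \<in> carrier G" "x = f a" by blast
    then show "\<psi> x \<in> carrier F2" using eq by (metis ph.hom_closed)
  next
    fix x y assume "x \<in> carrier H" "y \<in> carrier H"
    then have "x \<in> f ` carrier G" "y \<in> f ` carrier G" using fs by simp_all
    then obtain a b where a: "a \<in> carrier G" "x = f a" and b: "b \<in> carrier G" "y = f b" by blast
    have "\<psi> (x \<otimes>\<^bsub>H\<^esub> y) = \<psi> (f (a \<otimes>\<^bsub>G\<^esub> b))" using a b by simp
    also have "\<dots> = \<phi> (a \<otimes>\<^bsub>G\<^esub> b)" using eq a b by simp
    also have "\<dots> = \<psi> x \<otimes>\<^bsub>F2\<^esub> \<psi> y" using a b by (simp add: eq[symmetric])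
    finally show "\<psi> (x \<otimes>\<^bsub>H\<^esub> y) = \<psi> x \<otimes>\<^bsub>F2\<^esub> \<psi> y" .
  qed
  then show ?thesis using eq by blast
qed

lemma abelian_kills_derived:
  assumes G: "group G" and \<phi>: "\<phi> \<in> hom G F2" and na: "\<not> nonabelian_image G \<phi>"
  shows "\<forall>d\<in>derived G (carrier G). \<phi> d = \<one>\<^bsub>F2\<^esub>"
proof -
  interpret G: group G by (rule G)
  interpret ph: group_hom G F2 \<phi> by (unfold_locales) (rule \<phi>)
  have "derived G (carrier G) \<subseteq> kernel G F2 \<phi>"
    unfolding derived_def
  proof (rule G.generate_subgroup_incl)
    show "derived_set G (carrier G) \<subseteq> kernel G F2 \<phi>"
    proof
      fix z assume "z \<in> derived_set G (carrier G)"
      then obtain a b where ab: "a \<in> carrier G" "b \<in> carrier G"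
        "z = a \<otimes>\<^bsub>G\<^esub> b \<otimes>\<^bsub>G\<^esub> inv\<^bsub>G\<^esub> a \<otimes>\<^bsub>G\<^esub> inv\<^bsub>G\<^esub> b" by blast
      have comm: "\<phi> a \<otimes>\<^bsub>F2\<^esub> \<phi> b = \<phi> b \<otimes>\<^bsub>F2\<^esub> \<phi> a"
        using na ab(1,2) unfolding nonabelian_image_def by blast
      have c: "\<phi> a \<in> carrier F2" "\<phi> b \<in> carrier F2" using ab by auto
      have "\<phi> z = \<phi> a \<otimes>\<^bsub>F2\<^esub> \<phi> b \<otimes>\<^bsub>F2\<^esub> inv\<^bsub>F2\<^esub> \<phi> a \<otimes>\<^bsub>F2\<^esub> inv\<^bsub>F2\<^esub> \<phi> b"
        using ab by simp
      also have "\<dots> = \<phi> b \<otimes>\<^bsub>F2\<^esub> \<phi> a \<otimes>\<^bsub>F2\<^esub> inv\<^bsub>F2\<^esub> \<phi> a \<otimes>\<^bsub>F2\<^esub> inv\<^bsub>F2\<^esub> \<phi> b"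
        using comm by simp
      also have "\<phi> b \<otimes>\<^bsub>F2\<^esub> \<phi> a \<otimes>\<^bsub>F2\<^esub> inv\<^bsub>F2\<^esub> \<phi> a = \<phi> b"
        using c by (simp add: F2.m_assoc)
      finally have "\<phi> z = \<one>\<^bsub>F2\<^esub>" using c by simp
      then show "z \<in> kernel G F2 \<phi>" using ab by (simp add: kernel_def)
    qed
    show "subgroup (kernel G F2 \<phi>) G" by (rule ph.subgroup_kernel)
  qed
  then show ?thesis by (auto simp: kernel_def)
qed

lemma fg_quot:
  assumes G: "group G" and N: "normal N G" and fg: "finitely_generated G"
  shows "finitely_generated (G Mod N)"
proof -
  interpret G: group G by (rule G)
  interpret N: normal N G by (rule N)
  interpret Q: group "G Mod N" by (rule N.factorgroup_is_group)
  interpret \<pi>: group_hom G "G Mod N" "\<lambda>a. N #>\<^bsub>G\<^esub> a"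
    by (unfold_locales) (rule N.r_coset_hom_Mod)
  obtain Gs where Gs: "finite Gs" "Gs \<subseteq> carrier G" "generate G Gs = carrier G"
    using fg unfolding finitely_generated_def by blast
  have "generate (G Mod N) ((\<lambda>a. N #>\<^bsub>G\<^esub> a) ` Gs) = (\<lambda>a. N #>\<^bsub>G\<^esub> a) ` generate G Gs"
    using \<pi>.generate_img[OF Gs(2)] .
  also have "\<dots> = carrier (G Mod N)" using Gs(3) by (simp add: carrier_FactGroup)
  finally show ?thesis unfolding finitely_generated_def
    using Gs by (intro exI[of _ "(\<lambda>a. N #>\<^bsub>G\<^esub> a) ` Gs"]) (auto simp: carrier_FactGroup)
qed

theorem mainTheorem5:
  fixes G :: "('a, 'b) monoid_scheme" and H :: "('c, 'd) monoid_scheme" and f :: "'a \<Rightarrow> 'c"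
  assumes "group G" and "group H"
    and "finitely_generated G" and "finitely_generated H"
    and "f \<in> epi G H"
  shows "f_RF G H f \<in> iso (RF G) (RF H) \<longleftrightarrow>
           (f_na G H f \<in> iso (RFna G) (RFna H) \<and> b1 G = b1 H)"
proof -
  interpret G: group G by (rule assms(1))
  interpret H: group H by (rule assms(2))
  have f: "f \<in> hom G H" and fs: "f ` carrier G = carrier H" using assms(5) by (auto simp: epi_def)
  interpret fh: group_hom G H f by (unfold_locales) (rule f)
  define KG where "KG = RF_kernel G"
  define KH where "KH = RF_kernel H"
  define NG where "NG = RFna_kernel G"
  define NH where "NH = RFna_kernel H"
  have KGe: "KG = {g \<in> carrier G. \<forall>h\<in>hom G F2. h g = \<one>\<^bsub>F2\<^esub>}" unfolding KG_def by (rule RF_kernel_eq)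
  have KHe: "KH = {g \<in> carrier H. \<forall>h\<in>hom H F2. h g = \<one>\<^bsub>F2\<^esub>}" unfolding KH_def by (rule RF_kernel_eq)
  have NGe: "NG = {g \<in> carrier G. \<forall>h\<in>{h \<in> hom G F2. nonabelian_image G h}. h g = \<one>\<^bsub>F2\<^esub>}"
    unfolding NG_def by (rule RFna_kernel_eq)
  have NHe: "NH = {g \<in> carrier H. \<forall>h\<in>{h \<in> hom H F2. nonabelian_image H h}. h g = \<one>\<^bsub>F2\<^esub>}"
    unfolding NH_def by (rule RFna_kernel_eq)
  have nKG: "normal KG G" unfolding KGe by (rule hom_kernels_normal[OF assms(1)]) simp
  have nKH: "normal KH H" unfolding KHe by (rule hom_kernels_normal[OF assms(2)]) simp
  have nNG: "normal NG G" unfolding NGe by (rule hom_kernels_normal[OF assms(1)]) blast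
  have nNH: "normal NH H" unfolding NHe by (rule hom_kernels_normal[OF assms(2)]) blast
  have oneKH: "\<one>\<^bsub>H\<^esub> \<in> KH" using nKH by (simp add: normal_def subgroup.one_closed)
  have oneNH: "\<one>\<^bsub>H\<^esub> \<in> NH" using nNH by (simp add: normal_def subgroup.one_closed)
  have KGKH: "\<forall>k\<in>KG. f k \<in> KH"
  proof
    fix k assume k: "k \<in> KG"
    have "\<forall>h\<in>hom H F2. h (f k) = \<one>\<^bsub>F2\<^esub>"
    proof
      fix h assume "h \<in> hom H F2"
      then have "h \<circ> f \<in> hom G F2" using f by (rule hom_compose[rotated])
      then show "h (f k) = \<one>\<^bsub>F2\<^esub>" using k KGe by auto
    qed
    then show "f k \<in> KH" using k KGe KHe by auto
  qed
  have NGNH: "\<forall>k\<in>NG. f k \<in> NH"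
  proof
    fix k assume k: "k \<in> NG"
    have "\<forall>h\<in>{h \<in> hom H F2. nonabelian_image H h}. h (f k) = \<one>\<^bsub>F2\<^esub>"
    proof
      fix h assume h: "h \<in> {h \<in> hom H F2. nonabelian_image H h}"
      then have hc: "h \<circ> f \<in> hom G F2" using hom_compose[OF f] by blast
      from h obtain x y where xy: "x \<in> carrier H" "y \<in> carrier H"
        "h x \<otimes>\<^bsub>F2\<^esub> h y \<noteq> h y \<otimes>\<^bsub>F2\<^esub> h x" unfolding nonabelian_image_def by blast
      have "x \<in> f ` carrier G" "y \<in> f ` carrier G" using xy fs by simp_all
      then obtain a b where "a \<in> carrier G" "b \<in> carrier G" "x = f a" "y = f b" by blast
      then have "nonabelian_image G (h \<circ> f)" unfolding nonabelian_image_def using xy by auto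
      then show "h (f k) = \<one>\<^bsub>F2\<^esub>" using k NGe hc by auto
    qed
    then show "f k \<in> NH" using k NGe NHe by auto
  qed
  have isoRF: "f_RF G H f \<in> iso (RF G) (RF H) \<longleftrightarrow> (\<forall>g\<in>carrier G. f g \<in> KH \<longrightarrow> g \<in> KG)"
    unfolding f_RF_def RF_def KG_def[symmetric] KH_def[symmetric]
    by (rule induced_iso[OF assms(1,2) nKG nKH f KGKH fs])
  have isoNA: "f_na G H f \<in> iso (RFna G) (RFna H) \<longleftrightarrow> (\<forall>g\<in>carrier G. f g \<in> NH \<longrightarrow> g \<in> NG)"
    unfolding f_na_def RFna_def NG_def[symmetric] NH_def[symmetric]
    by (rule induced_iso[OF assms(1,2) nNG nNH f NGNH fs])
  define DG where "DG = derived G (carrier G)"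
  define DH where "DH = derived H (carrier H)"
  define A where "A = G Mod DG"
  define B where "B = H Mod DH"
  define p where "p = induced_quot G H DG DH f"
  have nDG: "normal DG G" unfolding DG_def by (rule G.derived_self_is_normal)
  have nDH: "normal DH H" unfolding DH_def by (rule H.derived_self_is_normal)
  interpret DG: normal DG G by (rule nDG)
  interpret DH: normal DH H by (rule nDH)
  have DHimg: "DH = f ` DG" unfolding DH_def DG_def
    using fh.derived_img[of "carrier G"] fs by simp
  have DGDH: "\<forall>k\<in>DG. f k \<in> DH" using DHimg by blast
  have cA: "comm_group A" unfolding A_def DG_def by (rule G.derived_quot_is_comm_group)
  have cB: "comm_group B" unfolding B_def DH_def by (rule H.derived_quot_is_comm_group)
  have ph: "p \<in> hom A B" unfolding p_def A_def B_def by (rule induced_hom[OF assms(1,2) nDG nDH f DGDH])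
  have ps: "p ` carrier A = carrier B" unfolding p_def A_def B_def
    by (rule induced_surj[OF assms(1,2) nDG nDH f DGDH fs])
  have fgA: "finitely_generated A" unfolding A_def by (rule fg_quot[OF assms(1) nDG assms(3)])
  have fgB: "finitely_generated B" unfolding B_def by (rule fg_quot[OF assms(2) nDH assms(4)])
  interpret E: epi_ab A B p
    using cA cB ph ps fgA fgB by (simp add: epi_ab_def epi_ab_axioms_def)
  have b1G: "b1 G = torsion_free_rank A" unfolding b1_def abelianization_def A_def DG_def ..
  have b1H: "b1 H = torsion_free_rank B" unfolding b1_def abelianization_def B_def DH_def ..
  define Tor where "Tor = (\<forall>y\<in>carrier A. p y = \<one>\<^bsub>B\<^esub> \<longrightarrow> \<not> Z_independent A {y})"
  have b1eq: "b1 G = b1 H \<longleftrightarrow> Tor"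
  proof
    assume e: "b1 G = b1 H"
    show Tor unfolding Tor_def
    proof (intro ballI impI notI)
      fix y assume "y \<in> carrier A" "p y = \<one>\<^bsub>B\<^esub>" "Z_independent A {y}"
      then have "torsion_free_rank B < torsion_free_rank A" by (rule E.rank_lt)
      then show False using e b1G b1H by simp
    qed
  next
    assume Tor
    then show "b1 G = b1 H" using E.rank_le1 E.rank_le2 b1G b1H unfolding Tor_def by (simp add: antisym)
  qed
  have pval: "p (DG #>\<^bsub>G\<^esub> g) = DH #>\<^bsub>H\<^esub> f g" if "g \<in> carrier G" for g
    unfolding p_def by (rule induced_val[OF assms(1,2) nDG nDH f DGDH that])
  have oneB: "\<one>\<^bsub>B\<^esub> = DH" unfolding B_def by simp
  have oneA: "\<one>\<^bsub>A\<^esub> = DG" unfolding A_def by simp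
  have cosA: "DG #>\<^bsub>G\<^esub> g \<in> carrier A" if "g \<in> carrier G" for g
    using that unfolding A_def by (auto simp: carrier_FactGroup)
  have Tor_iff: "Tor \<longleftrightarrow> (\<forall>k\<in>carrier G. f k = \<one>\<^bsub>H\<^esub> \<longrightarrow> \<not> Z_independent A {DG #>\<^bsub>G\<^esub> k})"
  proof
    assume T: Tor
    show "\<forall>k\<in>carrier G. f k = \<one>\<^bsub>H\<^esub> \<longrightarrow> \<not> Z_independent A {DG #>\<^bsub>G\<^esub> k}"
    proof (intro ballI impI)
      fix k assume k: "k \<in> carrier G" "f k = \<one>\<^bsub>H\<^esub>"
      have "p (DG #>\<^bsub>G\<^esub> k) = \<one>\<^bsub>B\<^esub>" using pval[OF k(1)] k(2) oneB DH.subset by simp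
      then show "\<not> Z_independent A {DG #>\<^bsub>G\<^esub> k}" using T cosA[OF k(1)] unfolding Tor_def by blast
    qed
  next
    assume T': "\<forall>k\<in>carrier G. f k = \<one>\<^bsub>H\<^esub> \<longrightarrow> \<not> Z_independent A {DG #>\<^bsub>G\<^esub> k}"
    show Tor unfolding Tor_def
    proof (intro ballI impI)
      fix y assume y: "y \<in> carrier A" "p y = \<one>\<^bsub>B\<^esub>"
      then obtain g where g: "g \<in> carrier G" "y = DG #>\<^bsub>G\<^esub> g"
        unfolding A_def by (auto simp: carrier_FactGroup)
      have "DH #>\<^bsub>H\<^esub> f g = DH" using y g pval oneB by simp
      then have "f g \<in> DH" using H.rcos_self[of "f g" DH] DH.subgroup_axioms g by simp
      then obtain d where d: "d \<in> DG" "f d = f g" using DHimg by auto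
      have dc: "d \<in> carrier G" using d DG.subset by auto
      define k where "k = g \<otimes>\<^bsub>G\<^esub> inv\<^bsub>G\<^esub> d"
      have kc: "k \<in> carrier G" unfolding k_def using g dc by simp
      have fk: "f k = \<one>\<^bsub>H\<^esub>" unfolding k_def using g dc d by simp
      have "k \<otimes>\<^bsub>G\<^esub> inv\<^bsub>G\<^esub> g = g \<otimes>\<^bsub>G\<^esub> inv\<^bsub>G\<^esub> d \<otimes>\<^bsub>G\<^esub> inv\<^bsub>G\<^esub> g" unfolding k_def ..
      moreover have "g \<otimes>\<^bsub>G\<^esub> inv\<^bsub>G\<^esub> d \<otimes>\<^bsub>G\<^esub> inv\<^bsub>G\<^esub> g \<in> DG"
        using DG.inv_op_closed2[OF g(1)] d(1) by simp
      ultimately have "k \<in> DG #>\<^bsub>G\<^esub> g" using DG.rcos_module_rev[OF assms(1) g(1) kc] by simp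
      then have "DG #>\<^bsub>G\<^esub> g = DG #>\<^bsub>G\<^esub> k"
        using G.repr_independence[OF _ g(1) DG.subgroup_axioms] by simp
      then show "\<not> Z_independent A {y}" using T' kc fk g by simp
    qed
  qed
  have one_F2: "\<one>\<^bsub>F2\<^esub> = []" by (simp add: F2_def)
  show ?thesis
  proof
    assume iso: "f_RF G H f \<in> iso (RF G) (RF H)"
    then have CRF: "\<forall>g\<in>carrier G. f g \<in> KH \<longrightarrow> g \<in> KG" using isoRF by blast
    have kill: "\<phi> k = \<one>\<^bsub>F2\<^esub>" if "\<phi> \<in> hom G F2" "k \<in> carrier G" "f k = \<one>\<^bsub>H\<^esub>" for \<phi> k
    proof -
      have "k \<in> KG" using CRF that oneKH by simp
      then show ?thesis using that KGe by auto
    qed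
    have CNA: "\<forall>g\<in>carrier G. f g \<in> NH \<longrightarrow> g \<in> NG"
    proof (intro ballI impI)
      fix g assume g: "g \<in> carrier G" and fg: "f g \<in> NH"
      have "\<forall>\<phi>\<in>{h \<in> hom G F2. nonabelian_image G h}. \<phi> g = \<one>\<^bsub>F2\<^esub>"
      proof
        fix \<phi> assume \<phi>: "\<phi> \<in> {h \<in> hom G F2. nonabelian_image G h}"
        then have \<phi>h: "\<phi> \<in> hom G F2" by simp
        obtain \<psi> where \<psi>: "\<psi> \<in> hom H F2" "\<forall>g\<in>carrier G. \<phi> g = \<psi> (f g)"
          using factor_hom[OF assms(1,2) f fs \<phi>h] kill[OF \<phi>h] by blast
        from \<phi> obtain x y where xy: "x \<in> carrier G" "y \<in> carrier G"
          "\<phi> x \<otimes>\<^bsub>F2\<^esub> \<phi> y \<noteq> \<phi> y \<otimes>\<^bsub>F2\<^esub> \<phi> x" unfolding nonabelian_image_def by blast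
        then have "\<psi> (f x) \<otimes>\<^bsub>F2\<^esub> \<psi> (f y) \<noteq> \<psi> (f y) \<otimes>\<^bsub>F2\<^esub> \<psi> (f x)" using \<psi>(2) by simp
        moreover have "f x \<in> carrier H" "f y \<in> carrier H" using xy(1,2) by simp_all
        ultimately have "nonabelian_image H \<psi>" unfolding nonabelian_image_def by blast
        then have "\<psi> (f g) = \<one>\<^bsub>F2\<^esub>" using fg NHe \<psi>(1) by auto
        then show "\<phi> g = \<one>\<^bsub>F2\<^esub>" using \<psi>(2) g by simp
      qed
      then show "g \<in> NG" using g NGe by simp
    qed
    have T': "\<forall>k\<in>carrier G. f k = \<one>\<^bsub>H\<^esub> \<longrightarrow> \<not> Z_independent A {DG #>\<^bsub>G\<^esub> k}"
    proof (intro ballI impI notI)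
      fix k assume k: "k \<in> carrier G" "f k = \<one>\<^bsub>H\<^esub>" and ind: "Z_independent A {DG #>\<^bsub>G\<^esub> k}"
      obtain \<psi>0 :: "'a set \<Rightarrow> int" where \<psi>0: "\<forall>a\<in>carrier A. \<forall>b\<in>carrier A. \<psi>0 (a \<otimes>\<^bsub>A\<^esub> b) = \<psi>0 a + \<psi>0 b"
        "\<psi>0 (DG #>\<^bsub>G\<^esub> k) \<noteq> 0"
        using comm_group.detect[OF cA fgA cosA[OF k(1)] ind] by blast
      define w :: "letter list" where "w = [(True, True)]"
      have wc: "w \<in> carrier F2" by (simp add: w_def F2_def)
      define \<Phi> where "\<Phi> g = w [^]\<^bsub>F2\<^esub> \<psi>0 (DG #>\<^bsub>G\<^esub> g)" for g
      have "\<Phi> \<in> hom G F2"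
      proof (rule homI)
        fix a assume "a \<in> carrier G"
        show "\<Phi> a \<in> carrier F2" unfolding \<Phi>_def using wc by simp
      next
        fix a b assume ab: "a \<in> carrier G" "b \<in> carrier G"
        have "DG #>\<^bsub>G\<^esub> (a \<otimes>\<^bsub>G\<^esub> b) = (DG #>\<^bsub>G\<^esub> a) \<otimes>\<^bsub>A\<^esub> (DG #>\<^bsub>G\<^esub> b)"
          unfolding A_def using ab by (simp add: DG.rcos_sum)
        then have "\<psi>0 (DG #>\<^bsub>G\<^esub> (a \<otimes>\<^bsub>G\<^esub> b)) = \<psi>0 (DG #>\<^bsub>G\<^esub> a) + \<psi>0 (DG #>\<^bsub>G\<^esub> b)"
          using \<psi>0(1) cosA ab by simp
        then show "\<Phi> (a \<otimes>\<^bsub>G\<^esub> b) = \<Phi> a \<otimes>\<^bsub>F2\<^esub> \<Phi> b"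
          unfolding \<Phi>_def using wc by (simp add: F2.int_pow_mult)
      qed
      then have "\<Phi> k = \<one>\<^bsub>F2\<^esub>" using kill k by blast
      then have "w = \<one>\<^bsub>F2\<^esub>" using F2_torsion_free[OF wc \<psi>0(2)] unfolding \<Phi>_def by blast
      then show False unfolding w_def one_F2 by simp
    qed
    have Tor using Tor_iff T' by blast
    then show "f_na G H f \<in> iso (RFna G) (RFna H) \<and> b1 G = b1 H" using b1eq isoNA CNA by blast
  next
    assume "f_na G H f \<in> iso (RFna G) (RFna H) \<and> b1 G = b1 H"
    then have CNA: "\<forall>g\<in>carrier G. f g \<in> NH \<longrightarrow> g \<in> NG" and Tor using isoNA b1eq by blast+
    then have T': "\<forall>k\<in>carrier G. f k = \<one>\<^bsub>H\<^esub> \<longrightarrow> \<not> Z_independent A {DG #>\<^bsub>G\<^esub> k}"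
      using Tor_iff by blast
    have kill: "\<phi> k = \<one>\<^bsub>F2\<^esub>" if \<phi>: "\<phi> \<in> hom G F2" and k: "k \<in> carrier G" "f k = \<one>\<^bsub>H\<^esub>" for \<phi> k
    proof (cases "nonabelian_image G \<phi>")
      case True
      have "k \<in> NG" using CNA k oneNH by simp
      then show ?thesis using NGe \<phi> True by auto
    next
      case False
      interpret ph: group_hom G F2 \<phi> by (unfold_locales) (rule \<phi>)
      interpret \<pi>: group_hom G A "\<lambda>a. DG #>\<^bsub>G\<^esub> a"
        unfolding A_def
        by (intro group_hom.intro group_hom_axioms.intro assms(1) DG.factorgroup_is_group DG.r_coset_hom_Mod)
      have "\<not> Z_independent A {DG #>\<^bsub>G\<^esub> k}" using T' k by blast
      then obtain n :: int where n: "n \<noteq> 0" "(DG #>\<^bsub>G\<^esub> k) [^]\<^bsub>A\<^esub> n = \<one>\<^bsub>A\<^esub>"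
        using comm_group.single_indep_iff[OF cA cosA[OF k(1)]] by blast
      then have "DG #>\<^bsub>G\<^esub> (k [^]\<^bsub>G\<^esub> n) = DG" using \<pi>.hom_int_pow[OF k(1)] oneA by simp
      then have "k [^]\<^bsub>G\<^esub> n \<in> DG" using G.rcos_self[of "k [^]\<^bsub>G\<^esub> n" DG] DG.subgroup_axioms k by simp
      then have "\<phi> (k [^]\<^bsub>G\<^esub> n) = \<one>\<^bsub>F2\<^esub>"
        using abelian_kills_derived[OF assms(1) \<phi> False] unfolding DG_def by blast
      then have "\<phi> k [^]\<^bsub>F2\<^esub> n = \<one>\<^bsub>F2\<^esub>" using ph.hom_int_pow[OF k(1)] by simp
      then show ?thesis using F2_torsion_free[OF _ n(1)] k by simp
    qed
    have "\<forall>g\<in>carrier G. f g \<in> KH \<longrightarrow> g \<in> KG"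
    proof (intro ballI impI)
      fix g assume g: "g \<in> carrier G" and fg: "f g \<in> KH"
      have "\<forall>\<phi>\<in>hom G F2. \<phi> g = \<one>\<^bsub>F2\<^esub>"
      proof
        fix \<phi> assume \<phi>h: "\<phi> \<in> hom G F2"
        obtain \<psi> where \<psi>: "\<psi> \<in> hom H F2" "\<forall>g\<in>carrier G. \<phi> g = \<psi> (f g)"
          using factor_hom[OF assms(1,2) f fs \<phi>h] kill[OF \<phi>h] by blast
        then have "\<psi> (f g) = \<one>\<^bsub>F2\<^esub>" using fg KHe by auto
        then show "\<phi> g = \<one>\<^bsub>F2\<^esub>" using \<psi>(2) g by simp
      qed
      then show "g \<in> KG" using g KGe by simp
    qed
    then show "f_RF G H f \<in> iso (RF G) (RF H)" using isoRF by blast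
  qed
qed

end
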